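(* Let $w \in \mathfrak{S}_n$ and let $i \in \textsf{supp}(w)$ be unconfined in the reduced words of $w$. Then for every $u \preceq w$ in the Bruhat order, either $i \notin \textsf{supp}(u)$, or $i$ is unconfined in the reduced words of $u$.
   Context: $\sigma_i$ ($1\le i\le n-1$) is the simple transposition swapping $i$ and $i+1$; products are compositions of maps. A reduced word of $w$ is a word $i_1\cdots i_\ell$ of minimal length with $w=\sigma_{i_1}\cdots\sigma_{i_\ell}$. $\textsf{supp}(w)$ is the set of letters appearing in (any) reduced word of $w$. Bruhat order: $u \preceq w$ iff some reduced word of $u$ is a subword of some reduced word of $w$. Given a reduced word $s$ in which the letter $i$ appears exactly once, $i$ is unconfined in $s$ if that occurrence is not between two occurrences of $i+1$ and not between two occurrences of $i-1$ in $s$. If $i$ is unconfined in one reduced word of $w$, it appears exactly once and is unconfined in every reduced word of $w$; this is what "unconfined in the reduced words of $w$" means. *)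

theory Defs
  imports "HOL-Combinatorics.Permutations" "HOL-Library.Sublist"
begin

text \<open>Permutations of the symmetric group S_n are functions on nat permuting {1..n}.\<close>

definition stransp :: "nat \<Rightarrow> nat \<Rightarrow> nat" where
  "stransp i = (\<lambda>x. if x = i then i + 1 else if x = i + 1 then i else x)"

definition word_perm :: "nat list \<Rightarrow> nat \<Rightarrow> nat" where
  "word_perm ws = foldr (\<lambda>i f. stransp i \<circ> f) ws id"

definition valid_word :: "nat \<Rightarrow> nat list \<Rightarrow> bool" where
  "valid_word n ws \<longleftrightarrow> (\<forall>i\<in>set ws. 1 \<le> i \<and> i \<le> n - 1)"

definition reduced_word :: "nat \<Rightarrow> (nat \<Rightarrow> nat) \<Rightarrow> nat list \<Rightarrow> bool" where
  "reduced_word n w ws \<longleftrightarrow> valid_word n ws \<and> word_perm ws = w \<and>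
     (\<forall>vs. valid_word n vs \<and> word_perm vs = w \<longrightarrow> length ws \<le> length vs)"

definition supp :: "nat \<Rightarrow> (nat \<Rightarrow> nat) \<Rightarrow> nat set" where
  "supp n w = {i. \<exists>ws. reduced_word n w ws \<and> i \<in> set ws}"

definition bruhat_le :: "nat \<Rightarrow> (nat \<Rightarrow> nat) \<Rightarrow> (nat \<Rightarrow> nat) \<Rightarrow> bool" where
  "bruhat_le n u w \<longleftrightarrow> (\<exists>us ws. reduced_word n u us \<and> reduced_word n w ws \<and> subseq us ws)"

definition between :: "nat list \<Rightarrow> nat \<Rightarrow> nat \<Rightarrow> bool" where
  "between ws i j \<longleftrightarrow> (\<exists>a p b. a < p \<and> p < b \<and> b < length ws \<and>
       ws ! a = j \<and> ws ! p = i \<and> ws ! b = j)"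

definition unconfined_word :: "nat list \<Rightarrow> nat \<Rightarrow> bool" where
  "unconfined_word ws i \<longleftrightarrow> count_list ws i = 1 \<and>
     \<not> between ws i (i + 1) \<and> \<not> (i \<ge> 1 \<and> between ws i (i - 1))"

definition unconfined :: "nat \<Rightarrow> (nat \<Rightarrow> nat) \<Rightarrow> nat \<Rightarrow> bool" where
  "unconfined n w i \<longleftrightarrow> (\<forall>ws. reduced_word n w ws \<longrightarrow> unconfined_word ws i)"

end

theory Submission
  imports Defs
begin


lemma wp_Nil[simp]: "word_perm [] = id" by (simp add: word_perm_def)
lemma wp_Cons[simp]: "word_perm (j#ws) = stransp j \<circ> word_perm ws" by (simp add: word_perm_def)
lemma wp_append: "word_perm (xs@ys) = word_perm xs \<circ> word_perm ys"
  by (induction xs) (auto simp: o_assoc)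
lemma st_inv[simp]: "stransp j (stransp j x) = x" by (simp add: stransp_def)
lemma st_comp: "stransp j \<circ> stransp j = id" by (auto simp: fun_eq_iff)
lemma bij_st: "bij (stransp j)" using o_bij[OF st_comp st_comp] .
lemma bij_wp: "bij (word_perm ws)"
proof (induction ws)
  case Nil then show ?case by (simp add: bij_def inj_on_def)
next
  case (Cons j ws) then show ?case unfolding wp_Cons by (rule bij_comp[OF _ bij_st])
qed
lemma inj_wp: "inj (word_perm ws)" using bij_wp bij_is_inj by blast
lemma surj_wp: "\<exists>r. word_perm ws r = a" using bij_wp[of ws] by (metis bij_pointE)

definition invp :: "(nat \<Rightarrow> nat) \<Rightarrow> nat \<Rightarrow> nat \<Rightarrow> bool" where
  "invp \<pi> a b \<longleftrightarrow> a < b \<and> (\<exists>p q. p < q \<and> \<pi> p = b \<and> \<pi> q = a)"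

lemma st_mono: "p < q \<Longrightarrow> \<not>(p = k \<and> q = Suc k) \<Longrightarrow> stransp k p < stransp k q"
  by (auto simp: stransp_def)

lemma invp_snoc: "invp (\<pi> \<circ> stransp k) a b \<Longrightarrow> invp \<pi> a b \<or> (a = \<pi> k \<and> b = \<pi> (Suc k))"
proof -
  assume "invp (\<pi> \<circ> stransp k) a b"
  then obtain p q where pq: "a < b" "p < q" "\<pi> (stransp k p) = b" "\<pi> (stransp k q) = a"
    by (auto simp: invp_def)
  show ?thesis
  proof (cases "p = k \<and> q = Suc k")
    case True then show ?thesis using pq by (auto simp: stransp_def)
  next
    case False then show ?thesis using pq st_mono[OF pq(2) False] unfolding invp_def by blast
  qed
qed

lemma invp_mono: "\<pi> k < \<pi> (Suc k) \<Longrightarrow> invp \<pi> a b \<Longrightarrow> invp (\<pi> \<circ> stransp k) a b"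
proof -
  assume asc: "\<pi> k < \<pi> (Suc k)" and "invp \<pi> a b"
  then obtain p q where pq: "a < b" "p < q" "\<pi> p = b" "\<pi> q = a"
    by (auto simp: invp_def)
  have "\<not>(p = k \<and> q = Suc k)" using asc pq by auto
  then have "stransp k p < stransp k q" using st_mono pq by blast
  then show ?thesis unfolding invp_def using pq by (intro conjI exI[of _ "stransp k p"] exI[of _ "stransp k q"]) auto
qed

lemma invp_cross: "\<pi> k < \<pi> (Suc k) \<Longrightarrow> invp (\<pi> \<circ> stransp k) (\<pi> k) (\<pi> (Suc k))"
  unfolding invp_def by (intro conjI exI[of _ k] exI[of _ "Suc k"]) (auto simp: stransp_def)

lemma invp_earlier: "invp (word_perm P) a b \<Longrightarrow>
   \<exists>P1 k P2. P = P1 @ k # P2 \<and> a = word_perm P1 k \<and> b = word_perm P1 (Suc k)"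
proof (induction P arbitrary: a b rule: rev_induct)
  case Nil then show ?case by (auto simp: invp_def)
next
  case (snoc k xs)
  have "invp (word_perm xs \<circ> stransp k) a b" using snoc.prems by (simp add: wp_append o_def)
  then have "invp (word_perm xs) a b \<or> (a = word_perm xs k \<and> b = word_perm xs (Suc k))"
    by (rule invp_snoc)
  then show ?case
  proof
    assume "invp (word_perm xs) a b"
    then obtain P1 j P2 where "xs = P1 @ j # P2" "a = word_perm P1 j" "b = word_perm P1 (Suc j)"
      using snoc.IH by blast
    then show ?thesis by (intro exI[of _ P1] exI[of _ j] exI[of _ "P2@[k]"]) auto
  next
    assume "a = word_perm xs k \<and> b = word_perm xs (Suc k)"
    then show ?thesis by (intro exI[of _ xs] exI[of _ k] exI[of _ "[]"]) auto
  qed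
qed

definition tr :: "nat \<Rightarrow> nat \<Rightarrow> nat \<Rightarrow> nat" where
  "tr a b x = (if x = a then b else if x = b then a else x)"

lemma tr_comm: "inj \<pi> \<Longrightarrow> \<pi> (stransp k z) = tr (\<pi> k) (\<pi> (Suc k)) (\<pi> z)"
  by (auto simp: tr_def stransp_def dest: injD)

lemma tr_sym: "tr a b = tr b a" by (auto simp: tr_def fun_eq_iff)
lemma tr_tr[simp]: "tr a b (tr a b x) = x" by (auto simp: tr_def)

lemma delete2:
  assumes P: "P = P1 @ k # P2"
    and e1: "word_perm P1 k = word_perm P (Suc j)" and e2: "word_perm P1 (Suc k) = word_perm P j"
  shows "word_perm (P @ [j]) = word_perm (P1 @ P2)"
proof
  fix z
  have "word_perm (P @ [j]) z = word_perm P (stransp j z)" by (simp add: wp_append)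
  also have "\<dots> = tr (word_perm P j) (word_perm P (Suc j)) (word_perm P z)"
    by (rule tr_comm[OF inj_wp])
  also have "word_perm P z = word_perm P1 (stransp k (word_perm P2 z))" by (simp add: P wp_append)
  also have "\<dots> = tr (word_perm P1 k) (word_perm P1 (Suc k)) (word_perm P1 (word_perm P2 z))"
    by (rule tr_comm[OF inj_wp])
  finally show "word_perm (P @ [j]) z = word_perm (P1 @ P2) z"
    using e1 e2 by (simp add: wp_append tr_sym[of "word_perm P j"])
qed

lemma ascent:
  assumes red: "reduced_word n u (P @ j # S)"
  shows "word_perm P j < word_perm P (Suc j)"
proof (rule ccontr)
  assume "\<not> ?thesis"
  moreover have "word_perm P j \<noteq> word_perm P (Suc j)" using inj_wp[of P] by (auto dest: injD)
  ultimately have "invp (word_perm P) (word_perm P (Suc j)) (word_perm P j)"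
    unfolding invp_def by (intro conjI exI[of _ j] exI[of _ "Suc j"]) auto
  then obtain P1 k P2 where P: "P = P1 @ k # P2" and e1: "word_perm P (Suc j) = word_perm P1 k"
     and e2: "word_perm P j = word_perm P1 (Suc k)"
    using invp_earlier by blast
  have "word_perm (P @ [j]) = word_perm (P1 @ P2)" using delete2[OF P e1[symmetric] e2[symmetric]] .
  then have "word_perm (P1 @ P2 @ S) = word_perm (P @ j # S)"
    by (metis append.assoc append_Cons append_Nil wp_append)
  moreover have "valid_word n (P1 @ P2 @ S)" using red P unfolding reduced_word_def valid_word_def by auto
  ultimately have "length (P @ j # S) \<le> length (P1 @ P2 @ S)" using red unfolding reduced_word_def by metis
  then show False using P by simp
qed

lemma prefix_inv: "reduced_word n u (P @ S) \<Longrightarrow> invp (word_perm P) a b \<Longrightarrow> invp u a b"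
proof (induction S arbitrary: P)
  case Nil then show ?case by (simp add: reduced_word_def)
next
  case (Cons j S)
  have "word_perm P j < word_perm P (Suc j)" using ascent Cons.prems(1) by blast
  then have "invp (word_perm (P @ [j])) a b" using invp_mono Cons.prems(2) by (simp add: wp_append)
  then show ?case using Cons.IH[of "P @ [j]"] Cons.prems(1) by simp
qed


definition Pres :: "nat \<Rightarrow> (nat \<Rightarrow> nat) \<Rightarrow> bool" where
  "Pres i \<pi> \<longleftrightarrow> (\<forall>r. (\<pi> r \<le> i) = (r \<le> i))"

definition LB :: "nat \<Rightarrow> (nat \<Rightarrow> nat) \<Rightarrow> nat \<Rightarrow> nat \<Rightarrow> bool" where
  "LB i \<pi> x y \<longleftrightarrow> (\<forall>r. (r \<le> i \<longrightarrow> \<pi> r = y \<or> (\<pi> r \<le> i \<and> \<pi> r \<noteq> x)) \<and>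
                        (i < r \<longrightarrow> \<pi> r = x \<or> (i < \<pi> r \<and> \<pi> r \<noteq> y)))"

lemma pres_st: "j \<noteq> i \<Longrightarrow> (stransp j r \<le> i) = (r \<le> i)"
  by (auto simp: stransp_def)

lemma pres_wp: "i \<notin> set ws \<Longrightarrow> Pres i (word_perm ws)"
  by (induction ws) (auto simp: Pres_def pres_st)

lemma fix_wp: "(\<forall>k\<in>set ws. k \<noteq> z \<and> Suc k \<noteq> z) \<Longrightarrow> word_perm ws z = z"
  by (induction ws) (auto simp: stransp_def)

lemma LB_step: "Pres i \<pi> \<Longrightarrow> inj \<pi> \<Longrightarrow> LB i (\<pi> \<circ> stransp i) (\<pi> i) (\<pi> (Suc i))"
  unfolding LB_def Pres_def
  by (auto simp: stransp_def dest: injD) (metis not_le)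

lemma LB_pres: "LB i \<pi> x y \<Longrightarrow> Pres i \<sigma> \<Longrightarrow> LB i (\<pi> \<circ> \<sigma>) x y"
  unfolding LB_def Pres_def by (metis comp_apply not_le)

context
  fixes i :: nat and u :: "nat \<Rightarrow> nat" and x y :: nat
  assumes LBu: "LB i u x y" and xi: "x \<le> i" and iy: "i < y" and inju: "inj u"
begin

lemma F_cross: "invp u a b \<Longrightarrow> a \<le> i \<Longrightarrow> i < b \<Longrightarrow> a = x \<or> b = y"
  using LBu unfolding invp_def LB_def by (metis le_trans less_imp_le_nat not_le)

lemma F_x: "a \<le> i \<Longrightarrow> a \<noteq> x \<Longrightarrow> \<not> invp u a x"
  using LBu xi iy unfolding invp_def LB_def by (metis le_trans less_imp_le_nat not_le)

lemma F_y: "i < b \<Longrightarrow> b \<noteq> y \<Longrightarrow> \<not> invp u y b"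
  using LBu xi iy unfolding invp_def LB_def by (metis le_trans less_imp_le_nat not_le)

lemma G_left: "u i = y \<Longrightarrow> a \<le> i \<Longrightarrow> a \<noteq> x \<Longrightarrow> \<not> invp u a y"
  using LBu xi iy inju unfolding invp_def LB_def
  by (metis injD not_le order_less_trans)

lemma G_right: "u (Suc i) = x \<Longrightarrow> i < b \<Longrightarrow> b \<noteq> y \<Longrightarrow> \<not> invp u x b"
  using LBu xi iy inju unfolding invp_def LB_def
  by (metis injD not_le less_Suc_eq_le)

end


lemma two_i:
  assumes red: "reduced_word n u (A @ i # M @ i # T)" and iA: "i \<notin> set A" and iM: "i \<notin> set M"
    and LBu: "LB i u x y" and xi: "x \<le> i" and iy: "i < y"
    and PL: "x = i \<or> u i = y" and PR: "y = Suc i \<or> u (Suc i) = x"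
  shows False
proof -
  define \<pi>0 where "\<pi>0 = word_perm A"
  define p1 where "p1 = \<pi>0 i"
  define q1 where "q1 = \<pi>0 (Suc i)"
  define \<pi>1 where "\<pi>1 = \<pi>0 \<circ> stransp i"
  define \<pi>2 where "\<pi>2 = \<pi>1 \<circ> word_perm M"
  define p2 where "p2 = \<pi>2 i"
  define q2 where "q2 = \<pi>2 (Suc i)"
  define \<pi>3 where "\<pi>3 = \<pi>2 \<circ> stransp i"
  have uw: "u = word_perm (A @ i # M @ i # T)" using red by (simp add: reduced_word_def)
  have inju: "inj u" using uw inj_wp by simp
  have w1: "word_perm (A @ [i]) = \<pi>1" by (simp add: \<pi>1_def \<pi>0_def wp_append)
  have w2: "word_perm (A @ i # M) = \<pi>2"
    by (simp add: \<pi>2_def \<pi>1_def \<pi>0_def wp_append o_assoc)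
  have w3: "word_perm (A @ i # M @ [i]) = \<pi>3"
    by (simp add: \<pi>3_def \<pi>2_def \<pi>1_def \<pi>0_def wp_append o_assoc)
  have inj0: "inj \<pi>0" using inj_wp \<pi>0_def by simp
  have inj1: "inj \<pi>1" using inj_wp w1 by metis
  have pres0: "Pres i \<pi>0" using pres_wp iA \<pi>0_def by simp
  have presM: "Pres i (word_perm M)" using pres_wp iM by simp
  have p1i: "p1 \<le> i" using pres0 unfolding Pres_def p1_def by (metis le_refl)
  have q1i: "i < q1" using pres0 unfolding Pres_def q1_def by (metis Suc_n_not_le_n not_le)
  have LB1': "LB i \<pi>1 p1 q1" unfolding \<pi>1_def p1_def q1_def using LB_step pres0 inj0 by blast
  have LB1: "LB i \<pi>2 p1 q1" unfolding \<pi>2_def using LB_pres LB1' presM by blast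
  have red1: "reduced_word n u (A @ i # (M @ i # T))" using red by simp
  have asc1: "p1 < q1" using ascent[OF red1] p1_def q1_def \<pi>0_def by simp
  have red2: "reduced_word n u ((A @ i # M) @ i # T)" using red by simp
  have asc2: "p2 < q2" using ascent[OF red2] p2_def q2_def w2 by simp
  have I1: "invp u a b" if "invp \<pi>1 a b" for a b
    using prefix_inv[of n u "A @ [i]" "M @ i # T"] red w1 that by simp
  have I2: "invp u a b" if "invp \<pi>2 a b" for a b
    using prefix_inv[of n u "A @ i # M" "i # T"] red w2 that by simp
  have I3: "invp u a b" if "invp \<pi>3 a b" for a b
    using prefix_inv[of n u "A @ i # M @ [i]" "T"] red w3 that by simp
  have c1: "invp u p1 q1" using I1 invp_cross[of \<pi>0 i] asc1 unfolding \<pi>1_def p1_def q1_def by blast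
  have c2: "invp u p2 q2" using I3 invp_cross[of \<pi>2 i] asc2 unfolding \<pi>3_def p2_def q2_def by blast
  have p3a: "\<pi>3 r = \<pi>2 r" if "r \<noteq> i" "r \<noteq> Suc i" for r
    using that by (simp add: \<pi>3_def stransp_def)
  have p3i: "\<pi>3 i = q2" and p3s: "\<pi>3 (Suc i) = p2" by (simp_all add: \<pi>3_def stransp_def p2_def q2_def)
  obtain r1 where r1: "\<pi>2 r1 = p1" using surj_wp w2 by metis
  obtain r2 where r2: "\<pi>2 r2 = q1" using surj_wp w2 by metis
  have r1i: "i < r1" using LB1 r1 asc1 unfolding LB_def by (metis less_irrefl not_le)
  have r2i: "r2 \<le> i" using LB1 r2 asc1 unfolding LB_def by (metis less_irrefl not_le)
  have p2c: "p2 = q1 \<or> (p2 \<le> i \<and> p2 \<noteq> p1)" using LB1 unfolding LB_def p2_def by auto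
  have q2c: "q2 = p1 \<or> (i < q2 \<and> q2 \<noteq> q1)" using LB1 unfolding LB_def q2_def by auto
  note FC = F_cross[OF LBu xi iy inju]
  show False
  proof (cases "p2 = q1")
    case True
    then have q2R: "i < q2" "q2 \<noteq> q1" using q2c asc1 asc2 by auto
    have "r1 \<noteq> Suc i" using r1 q2R asc1 asc2 True q2_def by auto
    then have "\<pi>3 r1 = p1" using p3a r1 r1i by auto
    then have "invp \<pi>3 p1 q2" unfolding invp_def using p3i r1i p1i q2R
      by (intro conjI exI[of _ i] exI[of _ r1]) auto
    then have c3: "invp u p1 q2" using I3 by blast
    show False using PR
    proof
      assume "u (Suc i) = x"
      note G = G_right[OF LBu xi iy inju this]
      show False using FC[OF c1 p1i q1i] FC[OF c3 p1i q2R(1)] G c1 c3 q1i q2R by metis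
    next
      assume ySi: "y = Suc i"
      show False
      proof (cases "q1 = y")
        case True then show False using F_y[OF LBu xi iy inju, of q2] c2 \<open>p2 = q1\<close> q2R by auto
      next
        case False
        obtain r where r: "\<pi>1 r = y" using surj_wp w1 by metis
        have ri: "i < r" using LB1' r False iy unfolding LB_def by (metis not_le)
        have "r \<noteq> Suc i" using r ySi asc1 p1i unfolding \<pi>1_def p1_def by (auto simp: stransp_def)
        have "\<pi>1 i = q1" by (simp add: \<pi>1_def q1_def stransp_def)
        have "invp \<pi>1 y q1" unfolding invp_def using ri r \<open>\<pi>1 i = q1\<close> ySi q1i False
          by (intro conjI exI[of _ i] exI[of _ r]) auto
        then show False using I1 F_y[OF LBu xi iy inju, of q1] q1i False by blast
      qed
    qed
  next
    case False
    then have p2L: "p2 \<le> i" "p2 \<noteq> p1" using p2c by auto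
    have "r2 \<noteq> i" using r2 False p2_def by auto
    then have r2i': "r2 < i" using r2i by auto
    then have p3r2: "\<pi>3 r2 = q1" using p3a r2 by auto
    have c4: "invp u p2 q1" using I3 p3r2 p3s r2i' p2L q1i unfolding invp_def
      by (metis less_Suc_eq le_less_trans)
    show False
    proof (cases "q2 = p1")
      case True
      have p21: "p2 < p1" using asc2 True by simp
      show False using PL
      proof
        assume ui: "u i = y"
        note G = G_left[OF LBu xi iy inju ui]
        show False using FC[OF c1 p1i q1i] FC[OF c4 p2L(1) q1i] G c1 c4 p1i p2L by metis
      next
        assume xeq: "x = i"
        have p2x: "p2 \<noteq> x" using p21 p1i xeq by simp
        show False
        proof (cases "p1 = x")
          case True then show False using F_x[OF LBu xi iy inju p2L(1) p2x] c2 \<open>q2 = p1\<close> by simp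
        next
          case False
          obtain rx where rx: "\<pi>2 rx = x" using surj_wp w2 by metis
          have "rx \<le> i" using LB1 rx False xi unfolding LB_def by (metis not_le)
          moreover have "rx \<noteq> i" using rx p2x p2_def by auto
          ultimately have "invp \<pi>2 p2 x" unfolding invp_def using rx p21 p1i xeq p2_def
            by (intro conjI exI[of _ rx] exI[of _ i]) auto
          then show False using I2 F_x[OF LBu xi iy inju p2L(1) p2x] by blast
        qed
      qed
    next
      case False
      then have q2R: "i < q2" "q2 \<noteq> q1" using q2c by auto
      have "r1 \<noteq> Suc i" using r1 False q2_def by auto
      then have "\<pi>3 r1 = p1" using p3a r1 r1i by auto
      then have "invp \<pi>3 p1 q2" unfolding invp_def using p3i r1i p1i q2R \<open>r1 \<noteq> Suc i\<close>
        by (intro conjI exI[of _ i] exI[of _ r1]) auto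
      then have c3: "invp u p1 q2" using I3 by blast
      show False using FC[OF c1 p1i q1i] FC[OF c3 p1i q2R(1)] FC[OF c2 p2L(1) q2R(1)]
          FC[OF c4 p2L(1) q1i] p2L q2R by metis
    qed
  qed
qed


lemma LB_unique:
  assumes "LB i u x y" "LB i u x' y'" "x \<le> i" "x' \<le> i" "i < y" "i < y'" "bij u"
  shows "x = x' \<and> y = y'"
proof -
  obtain r where r: "u r = x" using assms(7) by (metis bij_pointE)
  obtain s where s: "u s = y" using assms(7) by (metis bij_pointE)
  show ?thesis using assms r s unfolding LB_def by (metis not_le)
qed

lemma between_split:
  assumes "vs = A @ i # B" "i \<notin> set A" "i \<notin> set B" "between vs i j"
  shows "j \<in> set A \<and> j \<in> set B"
proof -
  obtain a p b where abp: "a < p" "p < b" "b < length vs" "vs ! a = j" "vs ! p = i" "vs ! b = j"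
    using assms(4) unfolding between_def by blast
  have "p = length A"
  proof (rule ccontr)
    assume ne: "p \<noteq> length A"
    show False
    proof (cases "p < length A")
      case True then show False using abp assms by (metis nth_append nth_mem)
    next
      case False
      then have "p - length A - 1 < length B" "B ! (p - length A - 1) = i"
        using abp assms ne by (auto simp: nth_append split: if_splits)
      then show False using assms(3) by (metis nth_mem)
    qed
  qed
  then have "j \<in> set A" using abp assms by (metis nth_append nth_mem)
  moreover have "j \<in> set B"
  proof -
    have "b - length A - 1 < length B" "B ! (b - length A - 1) = j"
      using abp assms \<open>p = length A\<close> by (auto simp: nth_append split: if_splits)
    then show ?thesis by (metis nth_mem)
  qed
  ultimately show ?thesis by blast
qed

lemma between_intro:
  assumes "j \<in> set C" "j \<in> set D"
  shows "between (C @ i # D) i j"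
proof -
  obtain a where a: "a < length C" "C ! a = j" using assms(1) by (metis in_set_conv_nth)
  obtain b where b: "b < length D" "D ! b = j" using assms(2) by (metis in_set_conv_nth)
  show ?thesis unfolding between_def
    apply (rule exI[of _ a], rule exI[of _ "length C"], rule exI[of _ "length C + 1 + b"])
    using a b by (auto simp: nth_append)
qed

lemma main:
  assumes red: "reduced_word n u vs" and LBu: "LB i u x y" and xi: "x \<le> i" and iy: "i < y"
    and PL: "x = i \<or> u i = y" and PR: "y = Suc i \<or> u (Suc i) = x"
  shows "unconfined_word vs i"
proof -
  have uw: "u = word_perm vs" using red by (simp add: reduced_word_def)
  have inju: "inj u" using uw inj_wp by simp
  have iv: "i \<in> set vs"
  proof (rule ccontr)
    assume "i \<notin> set vs"
    then have pr: "Pres i u" using pres_wp uw by simp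
    obtain r where r: "u r = x" using surj_wp uw by metis
    have "i < r" using LBu r xi iy unfolding LB_def by (metis not_le less_irrefl)
    then show False using pr r xi unfolding Pres_def by (metis not_le)
  qed
  then obtain A B where vs: "vs = A @ i # B" and iA: "i \<notin> set A" using split_list_first by metis
  have iB: "i \<notin> set B"
  proof
    assume "i \<in> set B"
    then obtain M T where "B = M @ i # T" "i \<notin> set M" using split_list_first by metis
    then show False using two_i[of n u A i M T x y] red vs iA LBu xi iy PL PR by simp
  qed
  have cnt: "count_list vs i = 1" using vs iA iB by (simp add: count_list_0_iff)
  define \<tau>0 where "\<tau>0 = word_perm A \<circ> stransp i"
  have presA: "Pres i (word_perm A)" using pres_wp iA by simp
  have presB: "Pres i (word_perm B)" using pres_wp iB by simp
  have LB0: "LB i \<tau>0 (word_perm A i) (word_perm A (Suc i))"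
    unfolding \<tau>0_def using LB_step presA inj_wp by blast
  have uc: "u = \<tau>0 \<circ> word_perm B" using uw vs by (simp add: \<tau>0_def wp_append o_assoc)
  have "LB i u (word_perm A i) (word_perm A (Suc i))" using uc LB_pres LB0 presB by simp
  moreover have "word_perm A i \<le> i" using presA unfolding Pres_def by (metis le_refl)
  moreover have "i < word_perm A (Suc i)" using presA unfolding Pres_def by (metis Suc_n_not_le_n not_le)
  ultimately have xe: "x = word_perm A i" and ye: "y = word_perm A (Suc i)"
    using LB_unique[OF LBu _ xi _ iy] bij_wp uw by blast+
  have LBtau: "LB i (\<tau>0 \<circ> word_perm B1) x y" if "i \<notin> set B1" for B1
    using LB_pres LB0 pres_wp that xe ye by simp
  have right: "\<not> between vs i (Suc i)"
  proof
    assume "between vs i (Suc i)"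
    then have sA: "Suc i \<in> set A" and sB: "Suc i \<in> set B" using between_split vs iA iB by blast+
    obtain A1 A2 where A: "A = A1 @ Suc i # A2" "Suc i \<notin> set A2"
      using sA split_list_last by metis
    have redA: "reduced_word n u (A1 @ Suc i # (A2 @ i # B))" using red vs A by simp
    have asc: "word_perm A1 (Suc i) < word_perm A1 (Suc (Suc i))" using ascent[OF redA] .
    have fix2: "word_perm A2 (Suc i) = Suc i" using A iA by (intro fix_wp) auto
    have "y = word_perm A1 (Suc (Suc i))" using ye A fix2 by (simp add: wp_append stransp_def)
    moreover have "i < word_perm A1 (Suc i)"
    proof -
      have "i \<notin> set A1" using A iA by auto
      then have "Pres i (word_perm A1)" by (rule pres_wp)
      then show ?thesis unfolding Pres_def by (metis Suc_n_not_le_n not_le)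
    qed
    ultimately have "y \<noteq> Suc i" using asc by simp
    then have ux: "u (Suc i) = x" using PR by simp
    obtain B1 B2 where B: "B = B1 @ Suc i # B2" "Suc i \<notin> set B1"
      using sB split_list_first by metis
    define \<tau> where "\<tau> = \<tau>0 \<circ> word_perm B1"
    have iB1: "i \<notin> set B1" using iB B by simp
    have tw: "word_perm (A @ i # B1) = \<tau>" by (simp add: \<tau>_def \<tau>0_def wp_append o_assoc)
    have redB: "reduced_word n u ((A @ i # B1) @ Suc i # B2)" using red vs B by simp
    have asc2: "\<tau> (Suc i) < \<tau> (Suc (Suc i))" using ascent[OF redB] tw by simp
    have fixB: "word_perm B1 (Suc i) = Suc i" using B iB1 by (intro fix_wp) auto
    have tx: "\<tau> (Suc i) = x" using xe fixB by (simp add: \<tau>_def \<tau>0_def stransp_def)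
    have "invp (\<tau> \<circ> stransp (Suc i)) (\<tau> (Suc i)) (\<tau> (Suc (Suc i)))" using invp_cross asc2 .
    moreover have "word_perm ((A @ i # B1) @ [Suc i]) = \<tau> \<circ> stransp (Suc i)" using tw wp_append[of "A @ i # B1" "[Suc i]"] by simp
    ultimately have "invp u x (\<tau> (Suc (Suc i)))"
      using prefix_inv[of n u "(A @ i # B1) @ [Suc i]" B2] red vs B tx by simp
    moreover have "i < \<tau> (Suc (Suc i)) \<and> \<tau> (Suc (Suc i)) \<noteq> y"
    proof -
      have "LB i \<tau> x y" using LBtau[OF iB1] by (simp add: \<tau>_def)
      then have "\<tau> (Suc (Suc i)) = x \<or> (i < \<tau> (Suc (Suc i)) \<and> \<tau> (Suc (Suc i)) \<noteq> y)"
        unfolding LB_def by simp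
      then show ?thesis using asc2 tx by auto
    qed
    ultimately show False using G_right[OF LBu xi iy inju ux] by blast
  qed
  have left: "\<not> (i \<ge> 1 \<and> between vs i (i - 1))"
  proof
    assume "i \<ge> 1 \<and> between vs i (i - 1)"
    then have i1: "i \<ge> 1" and sA: "i - 1 \<in> set A" and sB: "i - 1 \<in> set B"
      using between_split vs iA iB by blast+
    have si: "Suc (i - 1) = i" using i1 by simp
    obtain A1 A2 where A: "A = A1 @ (i - 1) # A2" "i - 1 \<notin> set A2"
      using sA split_list_last by metis
    have redA: "reduced_word n u (A1 @ (i - 1) # (A2 @ i # B))" using red vs A by simp
    have asc: "word_perm A1 (i - 1) < word_perm A1 i" using ascent[OF redA] si by simp
    have fix2: "word_perm A2 i = i" using A iA by (intro fix_wp) auto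
    have "stransp (i - 1) i = i - 1" using i1 by (simp add: stransp_def)
    then have "x = word_perm A1 (i - 1)" using xe A fix2 by (simp add: wp_append)
    moreover have "word_perm A1 i \<le> i"
    proof -
      have "i \<notin> set A1" using A iA by auto
      then have "Pres i (word_perm A1)" by (rule pres_wp)
      then show ?thesis unfolding Pres_def by (metis le_refl)
    qed
    ultimately have "x \<noteq> i" using asc by simp
    then have uy: "u i = y" using PL by simp
    obtain B1 B2 where B: "B = B1 @ (i - 1) # B2" "i - 1 \<notin> set B1"
      using sB split_list_first by metis
    define \<tau> where "\<tau> = \<tau>0 \<circ> word_perm B1"
    have iB1: "i \<notin> set B1" using iB B by simp
    have tw: "word_perm (A @ i # B1) = \<tau>" by (simp add: \<tau>_def \<tau>0_def wp_append o_assoc)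
    have redB: "reduced_word n u ((A @ i # B1) @ (i - 1) # B2)" using red vs B by simp
    have asc2: "\<tau> (i - 1) < \<tau> i" using ascent[OF redB] tw si by simp
    have fixB: "word_perm B1 i = i" using B iB1 si by (intro fix_wp) auto
    have ty: "\<tau> i = y" using ye fixB by (simp add: \<tau>_def \<tau>0_def stransp_def)
    have "invp (\<tau> \<circ> stransp (i - 1)) (\<tau> (i - 1)) (\<tau> (Suc (i - 1)))"
      using invp_cross[of \<tau> "i - 1"] asc2 si by simp
    moreover have "word_perm ((A @ i # B1) @ [i - 1]) = \<tau> \<circ> stransp (i - 1)" using tw wp_append[of "A @ i # B1" "[i - 1]"] by simp
    ultimately have "invp u (\<tau> (i - 1)) y"
      using prefix_inv[of n u "(A @ i # B1) @ [i - 1]" B2] red vs B ty si by simp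
    moreover have "\<tau> (i - 1) \<le> i \<and> \<tau> (i - 1) \<noteq> x"
    proof -
      have "LB i \<tau> x y" using LBtau[OF iB1] by (simp add: \<tau>_def)
      then have "\<tau> (i - 1) = y \<or> (\<tau> (i - 1) \<le> i \<and> \<tau> (i - 1) \<noteq> x)"
        unfolding LB_def by simp
      then show ?thesis using asc2 ty by auto
    qed
    ultimately show False using G_left[OF LBu xi iy inju uy] by blast
  qed
  show ?thesis unfolding unconfined_word_def using cnt right left by simp
qed


lemma subseq_set: "subseq xs ys \<Longrightarrow> set xs \<subseteq> set ys"
  by (induction rule: list_emb.induct) auto

lemma no_cross:
  assumes red: "reduced_word n u vs" and iv: "i \<in> set vs" and pr: "Pres i u"
  shows False
proof -
  obtain A B where vs: "vs = A @ i # B" and iA: "i \<notin> set A" using split_list_first iv by metis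
  have asc: "word_perm A i < word_perm A (Suc i)" using ascent red vs by blast
  have "invp (word_perm A \<circ> stransp i) (word_perm A i) (word_perm A (Suc i))" using invp_cross asc .
  then have "invp u (word_perm A i) (word_perm A (Suc i))"
    using prefix_inv[of n u "A @ [i]" B] red vs wp_append[of A "[i]"] by simp
  moreover have "word_perm A i \<le> i" using pres_wp[OF iA] unfolding Pres_def by (metis le_refl)
  moreover have "i < word_perm A (Suc i)" using pres_wp[OF iA] unfolding Pres_def by (metis Suc_n_not_le_n not_le)
  ultimately show False using pr unfolding invp_def Pres_def
    by (metis le_trans less_imp_le_nat not_le)
qed

theorem lemma2p10:
  fixes n i :: nat and w :: "nat \<Rightarrow> nat"
  assumes "w permutes {1..n}"
    and "i \<in> supp n w"
    and "unconfined n w i"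
  shows "\<forall>u. bruhat_le n u w \<longrightarrow> i \<notin> supp n u \<or> unconfined n u i"
proof (intro allI impI)
  fix u assume "bruhat_le n u w"
  then obtain us ws where redu: "reduced_word n u us" and redw: "reduced_word n w ws"
    and sub: "subseq us ws" unfolding bruhat_le_def by blast
  have uwc: "unconfined_word ws i" using assms(3) redw unfolding unconfined_def by blast
  then have cw: "count_list ws i = 1" unfolding unconfined_word_def by simp
  then have "i \<in> set ws" by (metis count_list_0_iff zero_neq_one)
  then obtain C D where ws: "ws = C @ i # D" and iC: "i \<notin> set C" using split_list_first by metis
  have iD: "i \<notin> set D" using cw ws iC by (simp add: count_list_0_iff)
  have hR: "\<not> (Suc i \<in> set C \<and> Suc i \<in> set D)"
    using uwc between_intro ws unfolding unconfined_word_def by auto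
  have hL: "\<not> (i - 1 \<in> set C \<and> i - 1 \<in> set D)"
  proof (cases "i = 0")
    case True then show ?thesis using iC by simp
  next
    case False then show ?thesis using uwc between_intro ws unfolding unconfined_word_def by auto
  qed
  have uu: "u = word_perm us" using redu by (simp add: reduced_word_def)
  show "i \<notin> supp n u \<or> unconfined n u i"
  proof (cases "i \<in> set us")
    case False
    have "Pres i u" using pres_wp[OF False] uu by simp
    then have "i \<notin> supp n u" unfolding supp_def using no_cross by blast
    then show ?thesis by simp
  next
    case True
    then obtain A B where us: "us = A @ i # B" and iA: "i \<notin> set A" using split_list_first by metis
    obtain E F where EF: "ws = E @ F" "subseq A E" "subseq (i # B) F"
      using list_emb_appendD[of "(=)" A "i # B" ws] sub us by auto
    obtain G v H where GH: "F = G @ v # H" "i = v" "subseq B H"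
      using list_emb_ConsD[OF EF(3)] by blast
    have ws2: "ws = (E @ G) @ i # H" using EF GH by simp
    have "count_list ws i = count_list (E @ G) i + 1 + count_list H i" using ws2 by simp
    then have "i \<notin> set (E @ G)" "i \<notin> set H" using cw by (simp_all add: count_list_0_iff)
    have eq: "C @ i # D = (E @ G) @ i # H" using ws ws2 by simp
    have CE: "C = E @ G" and DH: "D = H" using eq unfolding append_Cons_eq_iff[OF iC iD] by auto
    have AC: "set A \<subseteq> set C" using subseq_set[OF EF(2)] CE by auto
    have BD: "set B \<subseteq> set D" using subseq_set[OF GH(3)] DH by auto
    have iB: "i \<notin> set B" using BD iD by auto
    define x where "x = word_perm A i"
    define y where "y = word_perm A (Suc i)"
    have presA: "Pres i (word_perm A)" using pres_wp iA by simp
    have presB: "Pres i (word_perm B)" using pres_wp iB by simp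
    have uc: "u = (word_perm A \<circ> stransp i) \<circ> word_perm B" using uu us by (simp add: wp_append o_assoc)
    have LB0: "LB i (word_perm A \<circ> stransp i) x y"
      unfolding x_def y_def by (rule LB_step[OF presA inj_wp])
    have LBu: "LB i u x y" unfolding uc by (rule LB_pres[OF LB0 presB])
    have xi: "x \<le> i" using presA unfolding Pres_def x_def by (metis le_refl)
    have iy: "i < y" using presA unfolding Pres_def y_def by (metis Suc_n_not_le_n not_le)
    have PL: "x = i \<or> u i = y"
    proof (cases "i - 1 \<in> set A")
      case False
      have "\<forall>k\<in>set A. k \<noteq> i \<and> Suc k \<noteq> i" using False iA by (metis diff_Suc_1)
      then have "word_perm A i = i" by (rule fix_wp)
      then show ?thesis by (simp add: x_def)
    next
      case True
      then have "i - 1 \<notin> set B" using hL AC BD by auto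
      then have "\<forall>k\<in>set B. k \<noteq> i \<and> Suc k \<noteq> i" using iB by (metis diff_Suc_1)
      then have "word_perm B i = i" by (rule fix_wp)
      then show ?thesis by (simp add: uc y_def stransp_def)
    qed
    have PR: "y = Suc i \<or> u (Suc i) = x"
    proof (cases "Suc i \<in> set A")
      case False
      have "word_perm A (Suc i) = Suc i" using False iA by (intro fix_wp) auto
      then show ?thesis by (simp add: y_def)
    next
      case True
      then have "Suc i \<notin> set B" using hR AC BD by auto
      then have "word_perm B (Suc i) = Suc i" using iB by (intro fix_wp) auto
      then show ?thesis by (simp add: uc x_def stransp_def)
    qed
    have "unconfined n u i" unfolding unconfined_def
      using main[OF _ LBu xi iy PL PR] by blast
    then show ?thesis by simp
  qed
qed

end
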